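(* Let $\rho>0$, $x>0$, $\alpha,\beta\in\{\pm1\}$, and $\eta\in\mathbb{R}$ with $\alpha\eta\not\equiv-\pi$ and $\alpha\eta\not\equiv 0 \pmod{2\pi\rho}$. Define $$A_{\alpha,\beta}(s) = \frac{\beta \, e^{x \beta i}}{2\pi} \cot\!\left[ \frac{\frac{\pi}{2} + \alpha \eta + i \log\!\left[ \beta i - s^2 + s\left(s^2 - 2 \beta i\right)^{1/2} \right]}{2\rho} \right] \frac{1}{\left(s^2 - 2\beta i\right)^{1/2}},$$ let $\mathcal{P}_\rho(\alpha\eta)=\{\frac{\pi}{2}+\alpha\eta+2\pi\rho k : k\in\mathbb{Z}\}\cap[-\pi,\pi)$, $\sigma_\varphi=\operatorname{sgn}(\cos\varphi)$, $a^{(\alpha,\beta)}_\varphi=-\frac{\beta\rho\,e^{x\beta i}}{2\pi i}$, and $$B_{\alpha,\beta}(s)=A_{\alpha,\beta}(s)-\sum_{\varphi \in \mathcal{P}_\rho(\alpha\eta)} \frac{a^{(\alpha,\beta)}_\varphi}{s - \sigma_\varphi \left( \beta i - i \sin\varphi \right)^{1/2}},$$ with Taylor coefficients $b^{(\alpha,\beta)}_k$ at $s=0$. Then $$\int_{-\infty}^\infty e^{-x s^2} \, B_{\alpha,\beta}(s) \, ds \sim \sum_{k=0}^\infty b_{2k}^{(\alpha,\beta)} \, \Gamma\!\left( \frac{2k+1}{2} \right) \, x^{- \frac{2k+1}{2}} \qquad \text{as } x \to \infty,$$ and the leading coefficient is $$b_0^{(\alpha,\beta)} = \frac{\beta \,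 e^{\beta \left(x - \frac{\pi}{4}\right)i}}{2\pi i} \left\{ - \frac{\beta}{\sqrt{2}} \, \cot\!\left[ \frac{(1 - \beta) \, \frac{\pi}{2} + \alpha \eta}{2 \rho} \right] - \rho \sum_{\varphi \in \mathcal{P}_\rho(\alpha\eta)} \sigma_\varphi \, \left(1 - \beta \sin\varphi\right)^{-\frac{1}{2}} \right\}.$$
   Context: Square roots are principal branches ($\operatorname{Re} z^{1/2}\ge0$) and $\log$ is the principal logarithm with branch cut along the nonpositive real axis. The poles of $A_{\alpha,\beta}$ are at $s=\sigma_\varphi(\beta i-i\sin\varphi)^{1/2}$, $\varphi\in\mathcal{P}_\rho(\alpha\eta)$, with residues $a^{(\alpha,\beta)}_\varphi$. The symbol $\sim$ means: for each $N$, the integral minus the sum over $k<N$ is $\mathrm{O}(x^{-(2N+1)/2})$ as $x\to\infty$ (the coefficients $b^{(\alpha,\beta)}_k$ depend on $x$ only through the unimodular factor $e^{x\beta i}$). *)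

theory Defs
  imports "HOL-Analysis.Analysis" "HOL-Library.Landau_Symbols"
begin

text \<open>The function A_{alpha,beta}(s); csqrt and Ln are the principal branches.\<close>
definition A_fun :: "real \<Rightarrow> real \<Rightarrow> real \<Rightarrow> real \<Rightarrow> real \<Rightarrow> complex \<Rightarrow> complex" where
  "A_fun \<rho> \<alpha> \<beta> \<eta> x s =
     of_real \<beta> * exp (of_real (x * \<beta>) * \<i>) / (2 * of_real pi)
     * cot ((of_real (pi / 2 + \<alpha> * \<eta>)
             + \<i> * Ln (of_real \<beta> * \<i> - s\<^sup>2 + s * csqrt (s\<^sup>2 - 2 * of_real \<beta> * \<i>)))
            / (2 * of_real \<rho>))
     * (1 / csqrt (s\<^sup>2 - 2 * of_real \<beta> * \<i>))"

definition Pset :: "real \<Rightarrow> real \<Rightarrow> real set" where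
  "Pset \<rho> c = {\<phi>. \<exists>k::int. \<phi> = pi / 2 + c + 2 * pi * \<rho> * of_int k} \<inter> {-pi..<pi}"

definition sigma_sgn :: "real \<Rightarrow> real" where
  "sigma_sgn \<phi> = sgn (cos \<phi>)"

definition a_res :: "real \<Rightarrow> real \<Rightarrow> real \<Rightarrow> complex" where
  "a_res \<rho> \<beta> x = - (of_real (\<beta> * \<rho>) * exp (of_real (x * \<beta>) * \<i>)) / (2 * of_real pi * \<i>)"

definition B_fun :: "real \<Rightarrow> real \<Rightarrow> real \<Rightarrow> real \<Rightarrow> real \<Rightarrow> complex \<Rightarrow> complex" where
  "B_fun \<rho> \<alpha> \<beta> \<eta> x s =
     A_fun \<rho> \<alpha> \<beta> \<eta> x s
     - (\<Sum>\<phi>\<in>Pset \<rho> (\<alpha> * \<eta>).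
          a_res \<rho> \<beta> x /
          (s - of_real (sigma_sgn \<phi>) * csqrt (of_real \<beta> * \<i> - \<i> * of_real (sin \<phi>))))"

definition taylor_coeff :: "(complex \<Rightarrow> complex) \<Rightarrow> nat \<Rightarrow> complex" where
  "taylor_coeff f k = (deriv ^^ k) f 0 / of_nat (fact k)"

end

theory Submission
  imports Defs "HOL-Probability.Distributions" "HOL-Complex_Analysis.Complex_Analysis"
begin

lemma aux_frac: "(D::real) > 0 \<Longrightarrow> (k::real) \<ge> 0 \<Longrightarrow> s*(2*(k+1)*(2*k+1)*F)/(4*D*(k+1)) = (k+1/2)*(s*F/D)"
proof -
  assume "D > 0" "k \<ge> 0"
  then have "4*D*(k+1) \<noteq> 0" "D \<noteq> 0" by auto
  then show ?thesis by (simp add: divide_simps) (simp add: algebra_simps)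
qed

lemma Gamma_half_nat: "Gamma (real k + 1/2) = sqrt pi * fact (2*k) / (4^k * fact k)"
proof (induction k)
  case 0 then show ?case by (simp add: Gamma_one_half_real)
next
  case (Suc k)
  have "Gamma (real (Suc k) + 1/2) = (real k + 1/2) * Gamma (real k + 1/2)"
  proof -
    have "real k + 1/2 \<notin> \<int>\<^sub>\<le>\<^sub>0" using nonpos_Ints_nonpos by force
    then show ?thesis using Gamma_plus1[of "real k + 1/2"] by (simp add: add_ac)
  qed
  also have "\<dots> = sqrt pi * fact (2*Suc k) / (4^Suc k * fact (Suc k))"
  proof -
    have f1: "fact (2*Suc k) = 2*(real k+1)*(2*real k+1)*fact(2*k)"
      by (simp add: algebra_simps)
    have f2: "fact (Suc k) = (real k + 1) * fact k" by simp
    have "sqrt pi * (2*(real k+1)*(2*real k+1)*fact(2*k)) / (4*(4^k * fact k)*(real k + 1))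
        = (real k + 1/2) * (sqrt pi * fact(2*k) / (4^k * fact k))"
      by (rule aux_frac) auto
    then show ?thesis unfolding Suc f1 f2 by (simp add: ac_simps)
  qed
  finally show ?case .
qed

lemma gauss_even:
  fixes x :: real assumes x: "x > 0"
  shows "((\<lambda>t. exp (-(x*t^2)) * t^(2*k)) has_integral (Gamma ((2 * real k + 1) / 2) * x powr (- (2 * real k + 1) / 2))) UNIV"
proof -
  define \<sigma> where "\<sigma> = 1 / sqrt (2*x)"
  have \<sigma>: "\<sigma> > 0" using x by (simp add: \<sigma>_def)
  have s2: "\<sigma>^2 = 1/(2*x)" using x by (simp add: \<sigma>_def power_divide)
  have hb: "has_bochner_integral lborel (\<lambda>t. normal_density 0 \<sigma> t * t ^ (2 * k)) (fact (2 * k) / ((2 / \<sigma>\<^sup>2)^k * fact k))"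
    using normal_moment_even[OF \<sigma>, of 0 k] by simp
  have "has_bochner_integral lborel (\<lambda>t. sqrt (2*pi*\<sigma>^2) * (normal_density 0 \<sigma> t * t ^ (2 * k))) (sqrt (2*pi*\<sigma>^2) * (fact (2 * k) / ((2 / \<sigma>\<^sup>2)^k * fact k)))"
    by (rule has_bochner_integral_mult_right[OF hb])
  moreover have "(\<lambda>t. sqrt (2*pi*\<sigma>^2) * (normal_density 0 \<sigma> t * t ^ (2 * k))) = (\<lambda>t. exp (-(x*t^2)) * t^(2*k))"
  proof
    fix t :: real
    have sp: "sqrt (2*pi*\<sigma>^2) > 0" using \<sigma> by simp
    have e: "exp (-(t - 0)\<^sup>2 / (2 * \<sigma>\<^sup>2)) = exp (-(x*t^2))" using x by (simp add: s2)
    show "sqrt (2*pi*\<sigma>^2) * (normal_density 0 \<sigma> t * t ^ (2 * k)) = exp (-(x*t^2)) * t^(2*k)"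
      unfolding normal_density_def e using sp \<sigma> by simp
  qed
  moreover have "sqrt (2*pi*\<sigma>^2) * (fact (2 * k) / ((2 / \<sigma>\<^sup>2)^k * fact k)) = Gamma ((2 * real k + 1) / 2) * x powr (- (2 * real k + 1) / 2)"
  proof -
    have g: "(2 * real k + 1) / 2 = real k + 1/2" by simp
    have p: "x powr (- (2 * real k + 1) / 2) = 1 / (x^k * sqrt x)"
    proof -
      have "x powr (- (2 * real k + 1) / 2) = 1 / x powr (real k + 1/2)"
      proof -
        have "- (2 * real k + 1) / 2 = -(real k + 1/2)" by simp
        then show ?thesis by (simp only: powr_minus_divide)
      qed
      also have "x powr (real k + 1/2) = x^k * sqrt x"
        using x by (subst powr_add) (simp add: powr_realpow powr_half_sqrt)
      finally show ?thesis .
    qed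
    have S: "sqrt (2*pi*\<sigma>^2) = sqrt pi / sqrt x" proof -
      have "2*pi*\<sigma>^2 = pi / x" using x by (simp add: s2)
      then show ?thesis by (simp add: real_sqrt_divide)
    qed
    have Q: "(2 / \<sigma>\<^sup>2)^k = 4^k * x^k" proof -
      have "2 / \<sigma>\<^sup>2 = 4 * x" by (simp add: s2)
      then show ?thesis by (simp add: power_mult_distrib)
    qed
    show ?thesis using x unfolding S Q g p Gamma_half_nat by (simp add: divide_simps)
  qed
  ultimately have "has_bochner_integral lborel (\<lambda>t. exp (-(x*t^2)) * t^(2*k)) (Gamma ((2 * real k + 1) / 2) * x powr (- (2 * real k + 1) / 2))" by simp
  note H = this
  show ?thesis
    by (subst has_bochner_integral_integral_eq[OF H, symmetric]) (rule has_integral_integral_lborel[OF integrable.intros[OF H]])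
qed

lemma gauss_odd:
  fixes x :: real assumes x: "x > 0"
  shows "((\<lambda>t. exp (-(x*t^2)) * t^(2*k+1)) has_integral 0) UNIV"
proof -
  define \<sigma> where "\<sigma> = 1 / sqrt (2*x)"
  have \<sigma>: "\<sigma> > 0" using x by (simp add: \<sigma>_def)
  have s2: "\<sigma>^2 = 1/(2*x)" using x by (simp add: \<sigma>_def power_divide)
  have hb: "has_bochner_integral lborel (\<lambda>t. normal_density 0 \<sigma> t * t ^ (2 * k + 1)) 0"
    using normal_moment_odd[OF \<sigma>, of 0 k] by simp
  have "has_bochner_integral lborel (\<lambda>t. sqrt (2*pi*\<sigma>^2) * (normal_density 0 \<sigma> t * t ^ (2 * k+1))) (sqrt (2*pi*\<sigma>^2) * 0)"
    by (rule has_bochner_integral_mult_right[OF hb])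
  moreover have "(\<lambda>t. sqrt (2*pi*\<sigma>^2) * (normal_density 0 \<sigma> t * t ^ (2 * k+1))) = (\<lambda>t. exp (-(x*t^2)) * t^(2*k+1))"
  proof
    fix t :: real
    have sp: "sqrt (2*pi*\<sigma>^2) > 0" using \<sigma> by simp
    have e: "exp (-(t - 0)\<^sup>2 / (2 * \<sigma>\<^sup>2)) = exp (-(x*t^2))" using x by (simp add: s2)
    show "sqrt (2*pi*\<sigma>^2) * (normal_density 0 \<sigma> t * t ^ (2 * k+1)) = exp (-(x*t^2)) * t^(2*k+1)"
      unfolding normal_density_def e using sp \<sigma> by simp
  qed
  ultimately have "has_bochner_integral lborel (\<lambda>t. exp (-(x*t^2)) * t^(2*k+1)) 0" by simp
  note H = this
  show ?thesis
    by (subst has_bochner_integral_integral_eq[OF H, symmetric]) (rule has_integral_integral_lborel[OF integrable.intros[OF H]])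
qed

lemma taylor_remainder_real:
  fixes f :: "complex \<Rightarrow> complex" and M :: real
  assumes an: "f analytic_on {0}"
    and bnd: "\<And>t::real. norm (f (of_real t)) \<le> M"
  shows "\<exists>K. \<forall>t::real. norm (f (of_real t) - (\<Sum>j<2*N. (deriv^^j) f 0 / fact j * of_real t ^ j)) \<le> K * \<bar>t\<bar>^(2*N)"
proof -
  define c where "c j = (deriv^^j) f 0 / fact j" for j
  obtain r where r: "r > 0" "f holomorphic_on ball 0 r" using an analytic_at_ball by blast
  define \<delta> where "\<delta> = r/2"
  have \<delta>: "\<delta> > 0" "cball 0 \<delta> \<subseteq> ball (0::complex) r" using r by (auto simp: \<delta>_def)
  have hol: "(deriv^^i) f holomorphic_on ball 0 r" for i
    by (rule holomorphic_higher_deriv[OF r(2)]) auto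
  have "compact ((deriv^^(Suc (2*N))) f ` cball 0 \<delta>)"
    by (rule compact_continuous_image)
       (use holomorphic_on_imp_continuous_on[OF hol[of "Suc (2*N)"]] \<delta> in \<open>auto intro: continuous_on_subset simp del: funpow.simps\<close>)
  then obtain B0 where B0: "\<And>z. z \<in> cball 0 \<delta> \<Longrightarrow> norm ((deriv^^(Suc (2*N))) f z) \<le> B0"
    using compact_imp_bounded bounded_iff by (metis imageI)
  define B where "B = max B0 0"
  have B: "\<And>z. z \<in> cball 0 \<delta> \<Longrightarrow> norm ((deriv^^(Suc (2*N))) f z) \<le> B" "B \<ge> 0"
    using B0 by (force simp: B_def)+
  have M0: "M \<ge> 0" using bnd[of 0] norm_ge_zero order_trans by blast
  define K1 where "K1 = B * \<delta> / fact (2*N) + norm (c (2*N))"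
  define K2 where "K2 = (M + (\<Sum>j<2*N. norm (c j) * \<delta>^j)) / \<delta>^(2*N)"
  have near: "norm (f (of_real t) - (\<Sum>j<2*N. c j * of_real t ^ j)) \<le> K1 * \<bar>t\<bar>^(2*N)" if t: "\<bar>t\<bar> \<le> \<delta>" for t :: real
  proof -
    have tS: "(of_real t :: complex) \<in> cball 0 \<delta>" using t by simp
    have T: "cmod ((deriv^^0) f (of_real t) - (\<Sum>i\<le>2*N. (deriv^^i) f 0 * (of_real t - 0) ^ i / fact i))
          \<le> B * cmod (of_real t - 0) ^ Suc (2*N) / fact (2*N)"
    proof (rule complex_Taylor[of "cball 0 \<delta>" "2*N" "\<lambda>i. (deriv^^i) f" B 0 "of_real t"])
      show "convex (cball (0::complex) \<delta>)" by simp
      show "((deriv^^i) f has_field_derivative (deriv^^(Suc i)) f x) (at x within cball 0 \<delta>)"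
        if "x \<in> cball 0 \<delta>" "i \<le> 2*N" for i x
        using holomorphic_derivI[OF hol[of i] _ , of x "cball 0 \<delta>"] that \<delta> by auto
      show "cmod ((deriv^^(Suc (2*N))) f x) \<le> B" if "x \<in> cball 0 \<delta>" for x using B that by auto
    qed (use tS \<delta> in auto)
    have sp: "(\<Sum>i\<le>2*N. (deriv^^i) f 0 * (of_real t - 0) ^ i / fact i) = (\<Sum>j<2*N. c j * of_real t ^ j) + c (2*N) * of_real t ^ (2*N)"
      by (simp add: c_def lessThan_Suc_atMost[symmetric])
    have "f (of_real t) - (\<Sum>j<2*N. c j * of_real t ^ j)
        = (f (of_real t) - (\<Sum>i\<le>2*N. (deriv^^i) f 0 * (of_real t - 0) ^ i / fact i)) + c (2*N) * of_real t ^ (2*N)"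
      unfolding sp by simp
    note E = this
    have "norm (f (of_real t) - (\<Sum>j<2*N. c j * of_real t ^ j)) \<le>
        norm (f (of_real t) - (\<Sum>i\<le>2*N. (deriv^^i) f 0 * (of_real t - 0) ^ i / fact i)) + norm (c (2*N) * of_real t ^ (2*N))"
      unfolding E by (rule norm_triangle_ineq)
    moreover have "norm (c (2*N) * of_real t ^ (2*N)) = norm (c (2*N)) * \<bar>t\<bar>^(2*N)"
      by (simp add: norm_mult norm_power)
    moreover have "norm (f (of_real t) - (\<Sum>i\<le>2*N. (deriv^^i) f 0 * (of_real t - 0) ^ i / fact i)) \<le> B * \<bar>t\<bar> ^ Suc (2*N) / fact (2*N)"
      using T by simp
    ultimately have "norm (f (of_real t) - (\<Sum>j<2*N. c j * of_real t ^ j)) \<le>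
        B * \<bar>t\<bar> ^ Suc (2*N) / fact (2*N) + norm (c (2*N)) * \<bar>t\<bar>^(2*N)"
      by linarith
    also have "B * \<bar>t\<bar> ^ Suc (2*N) / fact (2*N) \<le> B * \<delta> / fact (2*N) * \<bar>t\<bar>^(2*N)"
      using t B(2) by (simp add: divide_right_mono mult_left_mono mult_right_mono mult.assoc[symmetric])
    finally show ?thesis by (simp add: K1_def algebra_simps)
  qed
  have far: "norm (f (of_real t) - (\<Sum>j<2*N. c j * of_real t ^ j)) \<le> K2 * \<bar>t\<bar>^(2*N)" if t: "\<bar>t\<bar> \<ge> \<delta>" for t :: real
  proof -
    have q: "\<bar>t\<bar>^j \<le> \<delta>^j / \<delta>^(2*N) * \<bar>t\<bar>^(2*N)" if "j \<le> 2*N" for j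
    proof -
      have "(\<bar>t\<bar>/\<delta>)^j \<le> (\<bar>t\<bar>/\<delta>)^(2*N)"
        using t \<delta> that by (intro power_increasing) auto
      then have "\<bar>t\<bar>^j/\<delta>^j \<le> \<bar>t\<bar>^(2*N)/\<delta>^(2*N)" by (simp add: power_divide)
      then have "\<delta>^j * (\<bar>t\<bar>^j/\<delta>^j) \<le> \<delta>^j * (\<bar>t\<bar>^(2*N)/\<delta>^(2*N))" using \<delta> by (intro mult_left_mono) auto
      then show ?thesis using \<delta> by simp
    qed
    have n1: "norm (\<Sum>j<2*N. c j * of_real t ^ j) \<le> (\<Sum>j<2*N. norm (c j) * \<bar>t\<bar>^j)"
    proof -
      have "norm (\<Sum>j<2*N. c j * of_real t ^ j) \<le> (\<Sum>j<2*N. norm (c j * of_real t ^ j))"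
        by (rule norm_sum)
      also have "\<dots> = (\<Sum>j<2*N. norm (c j) * \<bar>t\<bar>^j)"
        by (simp add: norm_mult norm_power)
      finally show ?thesis .
    qed
    have "norm (f (of_real t) - (\<Sum>j<2*N. c j * of_real t ^ j)) \<le> M + (\<Sum>j<2*N. norm (c j) * \<bar>t\<bar>^j)"
      using bnd[of t] norm_triangle_ineq4[of "f (of_real t)" "(\<Sum>j<2*N. c j * of_real t ^ j)"] n1
      by linarith
    also have "\<dots> \<le> M / \<delta>^(2*N) * \<bar>t\<bar>^(2*N) + (\<Sum>j<2*N. norm (c j) * (\<delta>^j / \<delta>^(2*N) * \<bar>t\<bar>^(2*N)))"
    proof (intro add_mono sum_mono mult_left_mono)
      have "M*1 \<le> M*(\<bar>t\<bar> ^ (2 * N)/\<delta> ^ (2 * N))" using q[of 0] M0 by (intro mult_left_mono) auto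
      then show "M \<le> M / \<delta> ^ (2 * N) * \<bar>t\<bar> ^ (2 * N)" by simp
    qed (use q in auto)
    also have "\<dots> = K2 * \<bar>t\<bar>^(2*N)"
    proof -
      have "(\<Sum>j<2*N. norm (c j) * (\<delta>^j / \<delta>^(2*N) * \<bar>t\<bar>^(2*N)))
          = (\<Sum>j<2*N. norm (c j) * \<delta>^j) / \<delta>^(2*N) * \<bar>t\<bar>^(2*N)"
        by (simp add: sum_distrib_right sum_divide_distrib mult.assoc)
      then show ?thesis unfolding K2_def by (simp add: add_divide_distrib distrib_right)
    qed
    finally show ?thesis .
  qed
  show ?thesis
  proof (intro exI allI)
    fix t :: real
    have "norm (f (of_real t) - (\<Sum>j<2*N. c j * of_real t ^ j)) \<le> max K1 K2 * \<bar>t\<bar>^(2*N)"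
    proof (cases "\<bar>t\<bar> \<le> \<delta>")
      case True
      have "K1 * \<bar>t\<bar>^(2*N) \<le> max K1 K2 * \<bar>t\<bar>^(2*N)" by (intro mult_right_mono) auto
      then show ?thesis using near[of t] True by linarith
    next
      case False
      have "K2 * \<bar>t\<bar>^(2*N) \<le> max K1 K2 * \<bar>t\<bar>^(2*N)" by (intro mult_right_mono) auto
      then show ?thesis using far[of t] False by linarith
    qed
    then show "norm (f (of_real t) - (\<Sum>j<2*N. (deriv^^j) f 0 / fact j * of_real t ^ j)) \<le> max K1 K2 * \<bar>t\<bar>^(2*N)"
      by (simp add: c_def)
  qed
qed

definition mom :: "real \<Rightarrow> nat \<Rightarrow> real" where
  "mom x j = (if even j then Gamma ((real j + 1) / 2) * x powr (- (real j + 1) / 2) else 0)"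

lemma mom_has_integral:
  assumes x: "x > 0"
  shows "((\<lambda>t::real. exp (- of_real (x*t^2)) * (of_real t :: complex) ^ j) has_integral of_real (mom x j)) UNIV"
proof -
  have R: "((\<lambda>t::real. exp (-(x*t^2)) * t ^ j) has_integral mom x j) UNIV"
  proof (cases "even j")
    case True
    then obtain k where k: "j = 2*k" by blast
    show ?thesis using gauss_even[OF x, of k] True unfolding mom_def k by (simp add: add_ac)
  next
    case False
    then obtain k where k: "j = 2*k+1" using oddE by blast
    show ?thesis using gauss_odd[OF x, of k] False unfolding mom_def k by simp
  qed
  have "((\<lambda>t::real. of_real (exp (-(x*t^2)) * t ^ j) :: complex) has_integral of_real (mom x j)) UNIV"
    by (rule has_integral_of_real[OF R])
  moreover have "(\<lambda>t::real. of_real (exp (-(x*t^2)) * t ^ j) :: complex) = (\<lambda>t::real. exp (- of_real (x*t^2)) * (of_real t :: complex) ^ j)"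
    by (simp add: fun_eq_iff exp_of_real[symmetric])
  ultimately show ?thesis by simp
qed

lemma mom_sum:
  "(\<Sum>j<2*N. c j * of_real (mom x j) :: complex) = (\<Sum>k<N. c (2*k) * of_real (Gamma ((2 * real k + 1) / 2)) * of_real (x powr (- (2 * real k + 1) / 2)))"
proof (induction N)
  case 0 then show ?case by simp
next
  case (Suc N)
  have "(\<Sum>j<2*Suc N. c j * of_real (mom x j) :: complex) = (\<Sum>j<2*N. c j * of_real (mom x j)) + c (2*N) * of_real (mom x (2*N)) + c (2*N+1) * of_real (mom x (2*N+1))"
    by (simp add: add_ac)
  also have "c (2*N+1) * of_real (mom x (2*N+1)) = 0" by (simp add: mom_def)
  also have "c (2*N) * of_real (mom x (2*N)) = c (2*N) * of_real (Gamma ((2 * real N + 1) / 2)) * of_real (x powr (- (2 * real N + 1) / 2))"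
    by (simp add: mom_def)
  finally show ?case using Suc by simp
qed

lemma watson_x:
  fixes f :: "complex \<Rightarrow> complex" and K x :: real
  assumes cont: "continuous_on UNIV (\<lambda>t::real. f (of_real t))"
    and rem: "\<And>t::real. norm (f (of_real t) - (\<Sum>j<2*N. (deriv^^j) f 0 / fact j * of_real t ^ j)) \<le> K * \<bar>t\<bar>^(2*N)"
    and x: "x > 0"
  shows "(\<lambda>t::real. exp (- of_real (x*t\<^sup>2)) * f (of_real t)) integrable_on UNIV"
    and "norm (integral UNIV (\<lambda>t::real. exp (- of_real (x*t\<^sup>2)) * f (of_real t))
           - (\<Sum>k<N. (deriv^^(2*k)) f 0 / fact (2*k) * of_real (Gamma ((2 * real k + 1) / 2)) * of_real (x powr (- (2 * real k + 1) / 2))))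
         \<le> K * Gamma ((2 * real N + 1) / 2) * x powr (- (2 * real N + 1) / 2)"
proof -
  define c where "c j = (deriv^^j) f 0 / fact j" for j
  define e :: "real \<Rightarrow> complex" where "e t = exp (- of_real (x*t\<^sup>2))" for t
  define P where "P t = (\<Sum>j<2*N. c j * of_real t ^ j)" for t :: real
  define R where "R t = f (of_real t) - P t" for t :: real
  have eP: "((\<lambda>t. e t * P t) has_integral (\<Sum>j<2*N. c j * of_real (mom x j))) UNIV"
  proof -
    have "((\<lambda>t. \<Sum>j<2*N. c j * (e t * of_real t ^ j)) has_integral (\<Sum>j<2*N. c j * of_real (mom x j))) UNIV"
    proof (intro has_integral_sum has_integral_mult_right)
      fix j show "((\<lambda>t. e t * of_real t ^ j) has_integral of_real (mom x j)) UNIV"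
        unfolding e_def power2_eq_square[symmetric] by (rule mom_has_integral[OF x])
    qed auto
    moreover have "(\<lambda>t. \<Sum>j<2*N. c j * (e t * of_real t ^ j)) = (\<lambda>t. e t * P t)"
      by (simp add: P_def fun_eq_iff sum_distrib_left ac_simps)
    ultimately show ?thesis by simp
  qed
  have gK: "((\<lambda>t. K * (exp (-(x*t^2)) * t^(2*N))) has_integral (K * (Gamma ((2 * real N + 1) / 2) * x powr (- (2 * real N + 1) / 2)))) UNIV"
    by (intro has_integral_mult_right gauss_even[OF x])
  have contR: "continuous_on UNIV (\<lambda>t. e t * R t)"
    unfolding e_def R_def P_def
    by (intro continuous_intros cont)
  have boundR: "norm (e t * R t) \<le> K * (exp (-(x*t^2)) * t^(2*N))" for t
  proof -
    have "norm (e t) = exp (-(x*t^2))" by (simp add: e_def exp_of_real[symmetric] del: of_real_mult)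
    moreover have "norm (R t) \<le> K * t^(2*N)"
      using rem[of t] unfolding R_def P_def c_def by (simp add: power_even_abs)
    ultimately show ?thesis by (simp add: norm_mult mult_left_mono mult.left_commute)
  qed
  have intR: "(\<lambda>t. e t * R t) integrable_on UNIV"
    by (rule measurable_bounded_by_integrable_imp_integrable[OF _ _ boundR])
       (use continuous_imp_measurable_on_sets_lebesgue[OF contR] gK in auto)
  have eqf: "(\<lambda>t::real. exp (- of_real (x*t\<^sup>2)) * f (of_real t)) = (\<lambda>t. e t * P t + e t * R t)"
    by (simp add: fun_eq_iff e_def R_def algebra_simps)
  have hasf: "((\<lambda>t::real. exp (- of_real (x*t\<^sup>2)) * f (of_real t)) has_integral
      ((\<Sum>j<2*N. c j * of_real (mom x j)) + integral UNIV (\<lambda>t. e t * R t))) UNIV"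
    unfolding eqf by (intro has_integral_add eP integrable_integral intR)
  then show "(\<lambda>t::real. exp (- of_real (x*t\<^sup>2)) * f (of_real t)) integrable_on UNIV" by blast
  have "integral UNIV (\<lambda>t::real. exp (- of_real (x*t\<^sup>2)) * f (of_real t))
           - (\<Sum>k<N. (deriv^^(2*k)) f 0 / fact (2*k) * of_real (Gamma ((2 * real k + 1) / 2)) * of_real (x powr (- (2 * real k + 1) / 2)))
        = integral UNIV (\<lambda>t. e t * R t)"
    using integral_unique[OF hasf] mom_sum[where c=c and N=N and x=x] by (simp add: c_def)
  note D1 = this
  have "norm (integral UNIV (\<lambda>t. e t * R t)) \<le> integral UNIV (\<lambda>t. K * (exp (-(x*t^2)) * t^(2*N)))"
    by (rule integral_norm_bound_integral[OF intR _ boundR]) (use gK in blast)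
  note D2 = this
  have "integral UNIV (\<lambda>t. K * (exp (-(x*t^2)) * t^(2*N))) = K * Gamma ((2 * real N + 1) / 2) * x powr (- (2 * real N + 1) / 2)"
    using integral_unique[OF gK] by simp
  note D3 = this
  show "norm (integral UNIV (\<lambda>t::real. exp (- of_real (x*t\<^sup>2)) * f (of_real t))
           - (\<Sum>k<N. (deriv^^(2*k)) f 0 / fact (2*k) * of_real (Gamma ((2 * real k + 1) / 2)) * of_real (x powr (- (2 * real k + 1) / 2))))
         \<le> K * Gamma ((2 * real N + 1) / 2) * x powr (- (2 * real N + 1) / 2)"
    unfolding D1 using D2 D3 by linarith
qed

lemma beta_cases: "\<beta> \<in> {-1, 1::real} \<Longrightarrow> \<beta>^2 = 1" by auto

lemma q_facts:
  fixes t \<beta> :: real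
  assumes b: "\<beta> \<in> {-1, 1}"
  defines "q \<equiv> csqrt ((of_real t)\<^sup>2 - 2 * of_real \<beta> * \<i>)"
  shows "Re q > 0" "Re q * Im q = - \<beta>" "(Re q)^2 - (Im q)^2 = t^2" "Re q > \<bar>t\<bar>" "q \<noteq> 0"
proof -
  have sq: "q^2 = (of_real t)\<^sup>2 - 2 * of_real \<beta> * \<i>" unfolding q_def by simp
  have re: "(Re q)^2 - (Im q)^2 = t^2" using arg_cong[OF sq, of Re] by (simp add: power2_eq_square)
  have im: "2 * Re q * Im q = -2*\<beta>" using arg_cong[OF sq, of Im] by (simp add: power2_eq_square)
  have "Re q \<ge> 0" unfolding q_def by (rule Re_csqrt)
  moreover have "Re q \<noteq> 0" using im b by auto
  ultimately show a: "Re q > 0" by simp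
  show "Re q * Im q = - \<beta>" using im by (metis mult.commute mult_minus_right mult_cancel_left zero_neq_numeral mult.assoc)
  show "(Re q)^2 - (Im q)^2 = t^2" by (rule re)
  have "Im q \<noteq> 0" using im b by auto
  then have "(Re q)^2 > t^2" using re by (smt (verit) zero_less_power2)
  then show "Re q > \<bar>t\<bar>" using a by (metis abs_of_pos power2_abs power_less_imp_less_base abs_ge_zero)
  show "q \<noteq> 0" using a by auto
qed

lemma w_facts:
  fixes t \<beta> :: real
  assumes b: "\<beta> \<in> {-1, 1}"
  defines "q \<equiv> csqrt ((of_real t)\<^sup>2 - 2 * of_real \<beta> * \<i>)"
  defines "w \<equiv> of_real \<beta> * \<i> - (of_real t)\<^sup>2 + of_real t * q"
  shows "Im w \<noteq> 0" "norm w = Re q * (Re q - t)"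
proof -
  note qf = q_facts[OF b, of t, folded q_def]
  define a where "a = Re q"
  define c where "c = Im q"
  have a: "a > 0" "a * c = -\<beta>" "a^2 - c^2 = t^2" "a > \<bar>t\<bar>" using qf by (auto simp: a_def c_def)
  have Rw: "Re w = t*a - t^2" by (simp add: w_def a_def power2_eq_square)
  have Iw: "Im w = \<beta> + t*c" by (simp add: w_def c_def)
  have cb: "c = -\<beta>/a" using a by (simp add: field_simps)
  have Iw2: "Im w = \<beta> * (a - t) / a" using a unfolding Iw cb by (simp add: field_simps)
  have b2: "\<beta>^2 = 1" using b by auto
  show "Im w \<noteq> 0" unfolding Iw2 using a b by auto
  have "(norm w)^2 = (Re w)^2 + (Im w)^2" by (simp add: cmod_power2)
  also have "\<dots> = (a - t)^2 * (t^2 + \<beta>^2/a^2)"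
  proof -
    have e1: "(Re w)^2 = (a-t)^2 * t^2" unfolding Rw by algebra
    have e2: "(Im w)^2 = (a-t)^2 * (\<beta>^2/a^2)" unfolding Iw2 by (simp add: power_mult_distrib power_divide)
    show ?thesis unfolding e1 e2 by (simp add: distrib_left)
  qed
  also have "t^2 + \<beta>^2/a^2 = a^2"
    using a b2 cb by (simp add: power_divide) 
  finally have "(norm w)^2 = (a * (a - t))^2" by (simp add: power_mult_distrib ac_simps)
  then show "norm w = Re q * (Re q - t)"
  proof -
    have "a * (a - t) \<ge> 0" using a by auto
    then have "norm w = a * (a - t)" using \<open>(norm w)^2 = (a * (a - t))^2\<close> power2_eq_iff_nonneg[of "norm w" "a * (a - t)"] by simp
    then show ?thesis by (simp add: a_def)
  qed
qed

lemma norm_w_props: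
  fixes t \<beta> :: real
  assumes b: "\<beta> \<in> {-1, 1}"
  defines "q \<equiv> csqrt ((of_real t)\<^sup>2 - 2 * of_real \<beta> * \<i>)"
  defines "w \<equiv> of_real \<beta> * \<i> - (of_real t)\<^sup>2 + of_real t * q"
  shows "norm w = 1 \<Longrightarrow> t = 0" "t \<ge> 2 \<Longrightarrow> norm w \<le> 1/8" "t \<le> -2 \<Longrightarrow> norm w \<ge> 8"
proof -
  note qf = q_facts[OF b, of t, folded q_def]
  note nw = w_facts(2)[OF b, of t, folded q_def, folded w_def]
  define a where "a = Re q"
  define c where "c = Im q"
  have a: "a > 0" "a * c = -\<beta>" "a^2 - c^2 = t^2" "a > \<bar>t\<bar>" using qf by (auto simp: a_def c_def)
  have b2: "\<beta>^2 = 1" using b by auto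
  have "(a*c)^2 = 1" using a(2) b2 by simp
  then have ac: "a^2 * c^2 = 1" by (simp add: power_mult_distrib)
  have nw': "norm w = a * (a - t)" using nw by (simp add: a_def)
  show "t = 0" if "norm w = 1"
  proof -
    have h: "a*a - a*t = 1" using that nw' by (simp add: algebra_simps)
    have "(a*t)^2 = (a^2 - 1)^2" using h by (simp add: power2_eq_square algebra_simps)
    moreover have "(a*t)^2 = a^2 * a^2 - 1"
    proof -
      have "(a*t)^2 = a^2 * t^2" by (simp add: power_mult_distrib)
      also have "\<dots> = a^2 * (a^2 - c^2)" using a(3) by simp
      also have "\<dots> = a^2 * a^2 - a^2 * c^2" by (simp add: right_diff_distrib)
      finally show ?thesis using ac by simp
    qed
    ultimately have "(a^2 - 1)^2 = a^2*a^2 - 1" by simp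
    then have "a^2 = 1" by (simp add: power2_eq_square algebra_simps)
    then have "a * a = 1" by (simp add: power2_eq_square)
    then have "a*t = 0" using h by simp
    then show "t = 0" using a(1) by simp
  qed
  show "norm w \<le> 1/8" if t: "t \<ge> 2"
  proof -
    have "a * (a - t) * (a * (a + t)) = a^2 * (a^2 - t^2)" by (simp add: power2_eq_square algebra_simps)
    also have "a^2 - t^2 = c^2" using a(3) by simp
    also have "a^2 * c^2 = 1" by (rule ac)
    finally have e: "a * (a - t) * (a * (a + t)) = 1" .
    have "a \<ge> 2" "a + t \<ge> 4" using a t by auto
    then have "a * (a + t) \<ge> 2 * 4" by (intro mult_mono) auto
    then have "a * (a + t) \<ge> 8" by simp
    then have "a * (a - t) = 1 / (a * (a + t))" using e by (simp add: field_simps)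
    also have "\<dots> \<le> 1/8" using \<open>a * (a + t) \<ge> 8\<close> by (simp add: divide_simps)
    finally show ?thesis using nw' by simp
  qed
  show "norm w \<ge> 8" if t: "t \<le> -2"
  proof -
    have "a \<ge> 2" "a - t \<ge> 4" using a t by auto
    then have "a * (a - t) \<ge> 2 * 4" by (intro mult_mono) auto
    then show ?thesis using nw' by simp
  qed
qed

lemma cot_bound_pos:
  fixes z :: complex and v :: real
  assumes v: "v > 0" and iz: "Im z \<ge> v"
  shows "norm (cot z) \<le> 2 / (1 - exp (-2 * v))"
proof -
  define E where "E = exp (\<i> * z)"
  define u where "u = E^2"
  have E0: "E \<noteq> 0" by (simp add: E_def)
  have nu: "norm u = exp (-2 * Im z)"
    by (simp add: u_def E_def norm_power exp_of_nat_mult[symmetric] flip: exp_of_nat_mult)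
  define e0 where "e0 = exp (-2 * v)"
  have e0: "e0 < 1" "e0 > 0" using v by (auto simp: e0_def)
  have nue: "norm u \<le> e0" unfolding nu e0_def using iz by simp
  have u1: "norm (u - 1) \<ge> 1 - e0"
    using norm_triangle_ineq2[of 1 u] nue by (simp add: norm_minus_commute)
  then have u1': "u \<noteq> 1" using e0 by auto
  have "cot z = \<i> * (u + 1) / (u - 1)"
  proof -
    have "cot z = ((E + 1/E)/2) / ((E - 1/E)/(2*\<i>))"
      unfolding cot_def cos_exp_eq sin_exp_eq E_def by (simp add: exp_minus')
    also have "\<dots> = \<i> * (E*E + 1) / (E*E - 1)"
      using E0 u1' by (simp add: u_def power2_eq_square field_simps)
    finally show ?thesis by (simp add: u_def power2_eq_square)
  qed
  then have "norm (cot z) = norm (u + 1) / norm (u - 1)" by (simp add: norm_mult norm_divide)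
  also have "\<dots> \<le> 2 / (1 - e0)"
  proof (rule frac_le)
    show "norm (u + 1) \<le> 2" using norm_triangle_ineq[of u 1] nue e0 by simp
  qed (use u1 e0 in auto)
  finally show ?thesis by (simp add: e0_def)
qed

lemma cot_bound:
  fixes z :: complex and v :: real
  assumes v: "v > 0" and iz: "\<bar>Im z\<bar> \<ge> v"
  shows "norm (cot z) \<le> 2 / (1 - exp (-2 * v))"
proof (cases "Im z \<ge> v")
  case True then show ?thesis using cot_bound_pos[OF v] by blast
next
  case False
  then have "Im (-z) \<ge> v" using iz by auto
  then show ?thesis using cot_bound_pos[OF v, of "-z"] by simp
qed

definition qf :: "real \<Rightarrow> complex \<Rightarrow> complex" where
  "qf \<beta> s = csqrt (s\<^sup>2 - 2 * of_real \<beta> * \<i>)"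
definition wf :: "real \<Rightarrow> complex \<Rightarrow> complex" where
  "wf \<beta> s = of_real \<beta> * \<i> - s\<^sup>2 + s * qf \<beta> s"
definition zf :: "real \<Rightarrow> real \<Rightarrow> real \<Rightarrow> real \<Rightarrow> complex \<Rightarrow> complex" where
  "zf \<rho> \<alpha> \<beta> \<eta> s = (of_real (pi / 2 + \<alpha> * \<eta>) + \<i> * Ln (wf \<beta> s)) / (2 * of_real \<rho>)"
definition A0 :: "real \<Rightarrow> real \<Rightarrow> real \<Rightarrow> real \<Rightarrow> complex \<Rightarrow> complex" where
  "A0 \<rho> \<alpha> \<beta> \<eta> s = of_real \<beta> / (2 * of_real pi) * cot (zf \<rho> \<alpha> \<beta> \<eta> s) * (1 / qf \<beta> s)"
definition pf :: "real \<Rightarrow> real \<Rightarrow> complex" where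
  "pf \<beta> \<phi> = of_real (sigma_sgn \<phi>) * csqrt (of_real \<beta> * \<i> - \<i> * of_real (sin \<phi>))"
definition a0 :: "real \<Rightarrow> real \<Rightarrow> complex" where
  "a0 \<rho> \<beta> = - of_real (\<beta> * \<rho>) / (2 * of_real pi * \<i>)"
definition B0 :: "real \<Rightarrow> real \<Rightarrow> real \<Rightarrow> real \<Rightarrow> complex \<Rightarrow> complex" where
  "B0 \<rho> \<alpha> \<beta> \<eta> s = A0 \<rho> \<alpha> \<beta> \<eta> s - (\<Sum>\<phi>\<in>Pset \<rho> (\<alpha> * \<eta>). a0 \<rho> \<beta> / (s - pf \<beta> \<phi>))"

lemma Bfun_eq: "B_fun \<rho> \<alpha> \<beta> \<eta> x = (\<lambda>s. exp (of_real (x * \<beta>) * \<i>) * B0 \<rho> \<alpha> \<beta> \<eta> s)"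
proof
  fix s
  define E where "E = exp (of_real (x * \<beta>) * \<i>)"
  have 1: "A_fun \<rho> \<alpha> \<beta> \<eta> x s = E * A0 \<rho> \<alpha> \<beta> \<eta> s"
    unfolding A_fun_def A0_def zf_def wf_def qf_def E_def by (simp add: mult_ac)
  have 2: "a_res \<rho> \<beta> x = E * a0 \<rho> \<beta>"
    unfolding a_res_def a0_def E_def by (simp add: mult_ac)
  show "B_fun \<rho> \<alpha> \<beta> \<eta> x s = exp (of_real (x * \<beta>) * \<i>) * B0 \<rho> \<alpha> \<beta> \<eta> s"
    unfolding B_fun_def B0_def 1 2 E_def[symmetric] pf_def[symmetric]
    by (simp add: sum_distrib_left right_diff_distrib mult.assoc)
qed

lemma Pset_cos:
  assumes h4: "\<not> (\<exists>k::int. \<alpha> * \<eta> = - pi + 2 * pi * \<rho> * of_int k)"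
    and h5: "\<not> (\<exists>k::int. \<alpha> * \<eta> = 2 * pi * \<rho> * of_int k)"
    and \<phi>: "\<phi> \<in> Pset \<rho> (\<alpha> * \<eta>)"
  shows "cos \<phi> \<noteq> 0"
proof
  assume c: "cos \<phi> = 0"
  obtain k :: int where k: "\<phi> = pi / 2 + \<alpha> * \<eta> + 2 * pi * \<rho> * of_int k" and r: "-pi \<le> \<phi>" "\<phi> < pi"
    using \<phi> unfolding Pset_def by auto
  obtain i :: int where i: "odd i" "\<phi> = of_int i * (pi/2)" using c cos_zero_iff_int by blast
  have "-2 \<le> i" "i < 2"
  proof -
    have "-pi \<le> of_int i * (pi/2)" "of_int i * (pi/2) < pi" using r i by auto
    then have "(-2) * (pi/2) \<le> real_of_int i * (pi/2)" "real_of_int i * (pi/2) < 2 * (pi/2)" by simp_all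
    then have "-2 \<le> real_of_int i" "real_of_int i < 2"
      using mult_le_cancel_right_pos[of "pi/2" "-2" "real_of_int i"] mult_less_cancel_right_pos[of "pi/2" "real_of_int i" 2] pi_half_gt_zero
      by blast+
    then show "-2 \<le> i" "i < 2" by linarith+
  qed
  with i(1) have "i = -1 \<or> i = 1" by presburger
  then show False
  proof
    assume "i = -1"
    then have "\<alpha> * \<eta> = - pi + 2 * pi * \<rho> * of_int (-k)" using i(2) k by simp
    then show False using h4 by blast
  next
    assume "i = 1"
    then have "\<alpha> * \<eta> = 2 * pi * \<rho> * of_int (-k)" using i(2) k by simp
    then show False using h5 by blast
  qed
qed

lemma pf_Im:
  assumes b: "\<beta> \<in> {-1, 1}" and c: "cos \<phi> \<noteq> 0"
  shows "Im (pf \<beta> \<phi>) \<noteq> 0"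
proof -
  have s1: "sin \<phi> \<noteq> \<beta>"
  proof
    assume "sin \<phi> = \<beta>"
    then have "(sin \<phi>)^2 = 1" using b by auto
    then show False using c sin_cos_squared_add[of \<phi>] by simp
  qed
  define z where "z = of_real \<beta> * \<i> - \<i> * of_real (sin \<phi>)"
  have Iz: "Im z \<noteq> 0" using s1 by (simp add: z_def)
  have "Im (csqrt z) \<noteq> 0"
  proof
    assume a: "Im (csqrt z) = 0"
    have "Im z = Im ((csqrt z)^2)" by (simp only: power2_csqrt)
    also have "\<dots> = 2 * Re (csqrt z) * Im (csqrt z)" by (rule Im_power2)
    finally show False using Iz a by (metis mult_zero_right)
  qed
  moreover have "sigma_sgn \<phi> \<noteq> 0" using c by (simp add: sigma_sgn_def sgn_0_0)
  moreover obtain y where y: "y = csqrt z" by blast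
  moreover have "pf \<beta> \<phi> = of_real (sigma_sgn \<phi>) * y" by (simp add: pf_def z_def y)
  ultimately show ?thesis by simp
qed

lemma wf_real: "wf \<beta> (of_real t) = of_real \<beta> * \<i> - (of_real t)\<^sup>2 + of_real t * csqrt ((of_real t)\<^sup>2 - 2 * of_real \<beta> * \<i>)"
  by (simp add: wf_def qf_def)

lemma wf_nonpos: "\<beta> \<in> {-1,1} \<Longrightarrow> wf \<beta> (of_real t) \<notin> \<real>\<^sub>\<le>\<^sub>0"
  using w_facts(1)[of \<beta> t] unfolding wf_real complex_nonpos_Reals_iff by auto

lemma wf_ne0: "\<beta> \<in> {-1,1} \<Longrightarrow> wf \<beta> (of_real t) \<noteq> 0"
  using wf_nonpos[of \<beta> t] by auto

lemma norm_wf: "\<beta> \<in> {-1,1} \<Longrightarrow> norm (wf \<beta> (of_real t)) = 1 \<Longrightarrow> t = 0"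
  "\<beta> \<in> {-1,1} \<Longrightarrow> t \<ge> 2 \<Longrightarrow> norm (wf \<beta> (of_real t)) \<le> 1/8"
  "\<beta> \<in> {-1,1} \<Longrightarrow> t \<le> -2 \<Longrightarrow> norm (wf \<beta> (of_real t)) \<ge> 8"
  using norm_w_props[of \<beta> t] unfolding wf_real by auto

lemma qf_real_nonpos: "\<beta> \<in> {-1,1} \<Longrightarrow> (of_real t)\<^sup>2 - 2 * of_real \<beta> * \<i> \<notin> \<real>\<^sub>\<le>\<^sub>0"
  unfolding complex_nonpos_Reals_iff by auto

lemma qf_ne0: "\<beta> \<in> {-1,1} \<Longrightarrow> qf \<beta> (of_real t) \<noteq> 0"
  using q_facts(5)[of \<beta> t] by (simp add: qf_def)

lemma norm_qf: "\<beta> \<in> {-1,1} \<Longrightarrow> norm (qf \<beta> (of_real t)) \<ge> 1"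
proof -
  assume b: "\<beta> \<in> {-1,1}"
  have "norm ((of_real t)\<^sup>2 - 2 * of_real \<beta> * \<i> :: complex) \<ge> \<bar>Im ((of_real t)\<^sup>2 - 2 * of_real \<beta> * \<i> :: complex)\<bar>"
    by (rule abs_Im_le_cmod)
  also have "\<bar>Im ((of_real t)\<^sup>2 - 2 * of_real \<beta> * \<i> :: complex)\<bar> = 2" using b by auto
  finally have "norm ((of_real t)\<^sup>2 - 2 * of_real \<beta> * \<i> :: complex) \<ge> 1" by simp
  then show ?thesis by (simp add: qf_def)
qed

lemma Ln_beta_i: "\<beta> \<in> {-1,1} \<Longrightarrow> Ln (of_real \<beta> * \<i>) = \<i> * of_real (\<beta> * pi / 2)"
  by auto

lemma zf0: "\<beta> \<in> {-1,1} \<Longrightarrow> zf \<rho> \<alpha> \<beta> \<eta> 0 = of_real (((1 - \<beta>) * (pi / 2) + \<alpha> * \<eta>) / (2 * \<rho>))"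
proof -
  assume b: "\<beta> \<in> {-1,1}"
  have "wf \<beta> 0 = of_real \<beta> * \<i>" by (simp add: wf_def)
  then have "Ln (wf \<beta> 0) = \<i> * of_real (\<beta> * pi / 2)" using Ln_beta_i[OF b] by simp
  then show ?thesis unfolding zf_def by (simp add: field_simps)
qed

lemma Im_zf: "\<beta> \<in> {-1,1} \<Longrightarrow> \<rho> > 0 \<Longrightarrow> Im (zf \<rho> \<alpha> \<beta> \<eta> (of_real t)) = ln (norm (wf \<beta> (of_real t))) / (2 * \<rho>)"
  using wf_ne0[of \<beta> t] unfolding zf_def by (simp add: Im_divide_of_real[symmetric] del: Im_divide_of_real)

lemma sin_zf_ne0:
  assumes r: "\<rho> > 0" and b: "\<beta> \<in> {-1,1}"
    and h4: "\<not> (\<exists>k::int. \<alpha> * \<eta> = - pi + 2 * pi * \<rho> * of_int k)"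
    and h5: "\<not> (\<exists>k::int. \<alpha> * \<eta> = 2 * pi * \<rho> * of_int k)"
  shows "sin (zf \<rho> \<alpha> \<beta> \<eta> (of_real t)) \<noteq> 0"
proof
  assume "sin (zf \<rho> \<alpha> \<beta> \<eta> (of_real t)) = 0"
  then obtain n :: int where n: "zf \<rho> \<alpha> \<beta> \<eta> (of_real t) = of_real (n * pi)" using sin_eq_0 by blast
  then have "Im (zf \<rho> \<alpha> \<beta> \<eta> (of_real t)) = 0" by simp
  then have "ln (norm (wf \<beta> (of_real t))) = 0" using Im_zf[OF b r] r by simp
  then have "norm (wf \<beta> (of_real t)) = 1" using wf_ne0[OF b, of t] by simp
  then have t0: "t = 0" using norm_wf(1)[OF b] by blast
  have "(of_real (((1 - \<beta>) * (pi / 2) + \<alpha> * \<eta>) / (2 * \<rho>)) :: complex) = of_real (n * pi)"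
    using n zf0[OF b, of \<rho> \<alpha> \<eta>] t0 by (metis of_real_0)
  then have "((1 - \<beta>) * (pi / 2) + \<alpha> * \<eta>) / (2 * \<rho>) = n * pi" by (simp only: of_real_eq_iff)
  then have e: "(1 - \<beta>) * (pi / 2) + \<alpha> * \<eta> = 2 * pi * \<rho> * of_int n" using r by (simp add: field_simps)
  from b show False
  proof
    assume "\<beta> = -1"
    then have "\<alpha> * \<eta> = - pi + 2 * pi * \<rho> * of_int n" using e by simp
    then show False using h4 by blast
  next
    assume "\<beta> \<in> {1}"
    then have "\<alpha> * \<eta> = 2 * pi * \<rho> * of_int n" using e by simp
    then show False using h5 by blast
  qed
qed

lemma B0_analytic:
  assumes r: "\<rho> > 0" and b: "\<beta> \<in> {-1,1}"
    and h4: "\<not> (\<exists>k::int. \<alpha> * \<eta> = - pi + 2 * pi * \<rho> * of_int k)"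
    and h5: "\<not> (\<exists>k::int. \<alpha> * \<eta> = 2 * pi * \<rho> * of_int k)"
  shows "B0 \<rho> \<alpha> \<beta> \<eta> analytic_on {of_real t}"
proof -
  have nz: "of_real t - pf \<beta> \<phi> \<noteq> 0" if "\<phi> \<in> Pset \<rho> (\<alpha> * \<eta>)" for \<phi>
  proof
    assume "of_real t - pf \<beta> \<phi> = 0"
    then have "Im (pf \<beta> \<phi>) = 0" by (metis Im_complex_of_real eq_iff_diff_eq_0)
    then show False using pf_Im[OF b Pset_cos[OF h4 h5 that]] by simp
  qed
  have "(\<lambda>s. of_real \<beta> / (2 * of_real pi) * cot ((of_real (pi / 2 + \<alpha> * \<eta>) + \<i> * Ln (of_real \<beta> * \<i> - s\<^sup>2 + s * csqrt (s\<^sup>2 - 2 * of_real \<beta> * \<i>))) / (2 * of_real \<rho>)) * (1 / csqrt (s\<^sup>2 - 2 * of_real \<beta> * \<i>))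
        - (\<Sum>\<phi>\<in>Pset \<rho> (\<alpha> * \<eta>). a0 \<rho> \<beta> / (s - pf \<beta> \<phi>))) analytic_on {of_real t}"
  proof (intro analytic_intros)
    show "\<And>z. z \<in> {of_real t} \<Longrightarrow> z\<^sup>2 - 2 * of_real \<beta> * \<i> \<notin> \<real>\<^sub>\<le>\<^sub>0"
      using qf_real_nonpos[OF b] by auto
    show "(\<lambda>s. of_real \<beta> * \<i> - s\<^sup>2 + s * csqrt (s\<^sup>2 - 2 * of_real \<beta> * \<i>)) ` {of_real t} \<inter> \<real>\<^sub>\<le>\<^sub>0 = {}"
      using wf_nonpos[OF b, of t] by (auto simp: wf_def qf_def)
    show "\<And>z. z \<in> {of_real t} \<Longrightarrow> sin ((of_real (pi / 2 + \<alpha> * \<eta>) + \<i> * Ln (of_real \<beta> * \<i> - z\<^sup>2 + z * csqrt (z\<^sup>2 - 2 * of_real \<beta> * \<i>))) / (2 * of_real \<rho>)) \<noteq> 0"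
      using sin_zf_ne0[OF r b h4 h5, of t] by (auto simp: zf_def wf_def qf_def)
    show "\<And>z. z \<in> {of_real t} \<Longrightarrow> csqrt (z\<^sup>2 - 2 * of_real \<beta> * \<i>) \<noteq> 0"
      using qf_ne0[OF b, of t] by (auto simp: qf_def)
  qed (use nz r qf_real_nonpos[OF b] in auto)
  then show ?thesis unfolding B0_def[abs_def] A0_def zf_def wf_def qf_def .
qed

lemma B0_cont:
  assumes r: "\<rho> > 0" and b: "\<beta> \<in> {-1,1}"
    and h4: "\<not> (\<exists>k::int. \<alpha> * \<eta> = - pi + 2 * pi * \<rho> * of_int k)"
    and h5: "\<not> (\<exists>k::int. \<alpha> * \<eta> = 2 * pi * \<rho> * of_int k)"
  shows "continuous_on UNIV (\<lambda>t::real. B0 \<rho> \<alpha> \<beta> \<eta> (of_real t))"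
proof (intro continuous_at_imp_continuous_on ballI)
  fix t :: real
  have "isCont (B0 \<rho> \<alpha> \<beta> \<eta>) (of_real t)" by (rule analytic_at_imp_isCont[OF B0_analytic[OF r b h4 h5]])
  then show "isCont (\<lambda>t::real. B0 \<rho> \<alpha> \<beta> \<eta> (of_real t)) t"
    by (rule isCont_o2[OF isCont_of_real[OF continuous_ident]])
qed

lemma A0_far_bound:
  assumes r: "\<rho> > 0" and b: "\<beta> \<in> {-1,1}" and t: "\<bar>t\<bar> \<ge> 2"
  shows "norm (A0 \<rho> \<alpha> \<beta> \<eta> (of_real t)) \<le> (2 / (1 - exp (-2 * (ln 8 / (2 * \<rho>))))) / (2 * pi)"
proof -
  define v where "v = ln 8 / (2 * \<rho>)"
  have v: "v > 0" using r by (simp add: v_def)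
  have L: "\<bar>ln (norm (wf \<beta> (of_real t)))\<bar> \<ge> ln 8"
  proof (cases "t \<ge> 2")
    case True
    then have "norm (wf \<beta> (of_real t)) \<le> 1/8" "norm (wf \<beta> (of_real t)) > 0"
      using norm_wf(2)[OF b] wf_ne0[OF b] by auto
    then have "ln (norm (wf \<beta> (of_real t))) \<le> ln (1/8)" by (subst ln_le_cancel_iff) auto
    then show ?thesis by (simp add: ln_div)
  next
    case False
    then have "t \<le> -2" using t by auto
    then have "norm (wf \<beta> (of_real t)) \<ge> 8" using norm_wf(3)[OF b] by auto
    then have "ln (norm (wf \<beta> (of_real t))) \<ge> ln 8" by (subst ln_le_cancel_iff) auto
    then show ?thesis by simp
  qed
  have "\<bar>Im (zf \<rho> \<alpha> \<beta> \<eta> (of_real t))\<bar> \<ge> v"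
    unfolding Im_zf[OF b r] v_def using L r by (simp add: abs_divide divide_right_mono)
  then have C: "norm (cot (zf \<rho> \<alpha> \<beta> \<eta> (of_real t))) \<le> 2 / (1 - exp (-2 * v))"
    by (rule cot_bound[OF v])
  have Q: "norm (1 / qf \<beta> (of_real t)) \<le> 1"
    using norm_qf[OF b, of t] by (simp add: norm_divide divide_le_eq_1)
  have "norm (A0 \<rho> \<alpha> \<beta> \<eta> (of_real t)) = 1 / (2 * pi) * norm (cot (zf \<rho> \<alpha> \<beta> \<eta> (of_real t))) * norm (1 / qf \<beta> (of_real t))"
    using b unfolding A0_def by (auto simp: norm_mult norm_divide)
  also have "\<dots> \<le> 1 / (2 * pi) * (2 / (1 - exp (-2 * v))) * 1"
  proof -
    have "exp (-2 * v) < 1" using v by simp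
    then show ?thesis using C Q by (intro mult_mono mult_left_mono) auto
  qed
  finally show ?thesis by (simp add: v_def mult.commute)
qed

lemma sum_bound:
  assumes b: "\<beta> \<in> {-1,1}"
    and h4: "\<not> (\<exists>k::int. \<alpha> * \<eta> = - pi + 2 * pi * \<rho> * of_int k)"
    and h5: "\<not> (\<exists>k::int. \<alpha> * \<eta> = 2 * pi * \<rho> * of_int k)"
  shows "norm (\<Sum>\<phi>\<in>Pset \<rho> (\<alpha> * \<eta>). a0 \<rho> \<beta> / (of_real t - pf \<beta> \<phi>)) \<le> (\<Sum>\<phi>\<in>Pset \<rho> (\<alpha> * \<eta>). norm (a0 \<rho> \<beta>) / \<bar>Im (pf \<beta> \<phi>)\<bar>)"
proof -
  have "norm (\<Sum>\<phi>\<in>Pset \<rho> (\<alpha> * \<eta>). a0 \<rho> \<beta> / (of_real t - pf \<beta> \<phi>)) \<le> (\<Sum>\<phi>\<in>Pset \<rho> (\<alpha> * \<eta>). norm (a0 \<rho> \<beta> / (of_real t - pf \<beta> \<phi>)))"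
    by (rule norm_sum)
  also have "\<dots> \<le> (\<Sum>\<phi>\<in>Pset \<rho> (\<alpha> * \<eta>). norm (a0 \<rho> \<beta>) / \<bar>Im (pf \<beta> \<phi>)\<bar>)"
  proof (rule sum_mono)
    fix \<phi> assume \<phi>: "\<phi> \<in> Pset \<rho> (\<alpha> * \<eta>)"
    have I: "\<bar>Im (pf \<beta> \<phi>)\<bar> > 0" using pf_Im[OF b Pset_cos[OF h4 h5 \<phi>]] by simp
    have "\<bar>Im (pf \<beta> \<phi>)\<bar> = \<bar>Im (of_real t - pf \<beta> \<phi>)\<bar>" by simp
    also have "\<dots> \<le> norm (of_real t - pf \<beta> \<phi>)" by (rule abs_Im_le_cmod)
    finally have "\<bar>Im (pf \<beta> \<phi>)\<bar> \<le> norm (of_real t - pf \<beta> \<phi>)" .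
    then show "norm (a0 \<rho> \<beta> / (of_real t - pf \<beta> \<phi>)) \<le> norm (a0 \<rho> \<beta>) / \<bar>Im (pf \<beta> \<phi>)\<bar>"
      unfolding norm_divide by (rule divide_left_mono) (use I in \<open>auto intro!: mult_pos_pos simp: complex_eq_iff\<close>)
  qed
  finally show ?thesis .
qed

lemma B0_bounded:
  assumes r: "\<rho> > 0" and b: "\<beta> \<in> {-1,1}"
    and h4: "\<not> (\<exists>k::int. \<alpha> * \<eta> = - pi + 2 * pi * \<rho> * of_int k)"
    and h5: "\<not> (\<exists>k::int. \<alpha> * \<eta> = 2 * pi * \<rho> * of_int k)"
  shows "\<exists>M. \<forall>t::real. norm (B0 \<rho> \<alpha> \<beta> \<eta> (of_real t)) \<le> M"
proof -
  define S0 where "S0 = (\<Sum>\<phi>\<in>Pset \<rho> (\<alpha> * \<eta>). norm (a0 \<rho> \<beta>) / \<bar>Im (pf \<beta> \<phi>)\<bar>)"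
  define Ka where "Ka = (2 / (1 - exp (-2 * (ln 8 / (2 * \<rho>))))) / (2 * pi)"
  have "compact ((\<lambda>t::real. B0 \<rho> \<alpha> \<beta> \<eta> (of_real t)) ` {-2..2})"
    by (rule compact_continuous_image) (use B0_cont[OF r b h4 h5] continuous_on_subset in blast, simp)
  then obtain M1 where M1: "\<And>t. t \<in> {-2..2} \<Longrightarrow> norm (B0 \<rho> \<alpha> \<beta> \<eta> (of_real t)) \<le> M1"
    using compact_imp_bounded bounded_iff by (metis imageI)
  show ?thesis
  proof (intro exI allI)
    fix t :: real
    show "norm (B0 \<rho> \<alpha> \<beta> \<eta> (of_real t)) \<le> max M1 (Ka + S0)"
    proof (cases "\<bar>t\<bar> \<le> 2")
      case True
      then have "norm (B0 \<rho> \<alpha> \<beta> \<eta> (of_real t)) \<le> M1" using M1[of t] by (auto simp: abs_le_iff)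
      then show ?thesis by (simp add: le_max_iff_disj)
    next
      case False
      have "norm (B0 \<rho> \<alpha> \<beta> \<eta> (of_real t)) \<le> norm (A0 \<rho> \<alpha> \<beta> \<eta> (of_real t)) + norm (\<Sum>\<phi>\<in>Pset \<rho> (\<alpha> * \<eta>). a0 \<rho> \<beta> / (of_real t - pf \<beta> \<phi>))"
        unfolding B0_def by (rule norm_triangle_ineq4)
      also have "\<dots> \<le> Ka + S0"
        using A0_far_bound[OF r b, of t \<alpha> \<eta>] False sum_bound[OF b h4 h5, of t]
        unfolding Ka_def S0_def by (intro add_mono) auto
      finally show ?thesis by simp
    qed
  qed
qed

lemma csqrt_m2bi: "\<beta> \<in> {-1,1} \<Longrightarrow> csqrt (- (2 * of_real \<beta> * \<i>)) = 1 - of_real \<beta> * \<i>"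
proof -
  assume b: "\<beta> \<in> {-1,1}"
  have "(1 - of_real \<beta> * \<i>)^2 = - (2 * of_real \<beta> * \<i>)" using b by (auto simp: power2_eq_square algebra_simps)
  then show ?thesis by (intro csqrt_unique) auto
qed

lemma csqrt_pf:
  assumes b: "\<beta> \<in> {-1,1}" and u: "u = 1 - \<beta> * sin \<phi>" and u0: "u \<ge> 0"
  shows "csqrt (of_real \<beta> * \<i> - \<i> * of_real (sin \<phi>)) = of_real (sqrt (u/2)) * (1 + of_real \<beta> * \<i>)"
proof (rule csqrt_unique)
  have b2: "\<beta> * \<beta> = 1" using b by auto
  have "(of_real (sqrt (u/2)) * (1 + of_real \<beta> * \<i>))^2 = of_real (u/2) * (1 + of_real \<beta> * \<i>)^2"
  proof -
    have "(of_real (sqrt (u/2)) :: complex)^2 = of_real ((sqrt (u/2))^2)" by (simp only: of_real_power)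
    also have "(sqrt (u/2))^2 = u/2" using u0 by simp
    finally show ?thesis by (simp only: power_mult_distrib)
  qed
  also have "(1 + of_real \<beta> * \<i>)^2 = 2 * of_real \<beta> * \<i>" using b by (auto simp: power2_eq_square algebra_simps)
  also have "of_real (u/2) * (2 * of_real \<beta> * \<i>) = of_real \<beta> * \<i> - \<i> * of_real (sin \<phi>)"
    unfolding u using b by (auto simp: complex_eq_iff algebra_simps field_simps)
  finally show "(of_real (sqrt (u/2)) * (1 + of_real \<beta> * \<i>))^2 = of_real \<beta> * \<i> - \<i> * of_real (sin \<phi>)" .
  show "0 < Re (of_real (sqrt (u/2)) * (1 + of_real \<beta> * \<i>)) \<or>
    Re (of_real (sqrt (u/2)) * (1 + of_real \<beta> * \<i>)) = 0 \<and> 0 \<le> Im (of_real (sqrt (u/2)) * (1 + of_real \<beta> * \<i>))"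
    using u0 by (cases "u = 0") auto
qed

lemma l1: fixes S P C :: complex assumes "S*S = 2" "P \<noteq> 0"
  shows "C/(2*P) * (1/(1-\<i>)) = ((1-\<i>)/S)/(2*P*\<i>) * (-(C/S))"
proof -
  have "1 - \<i> \<noteq> 0" by (simp add: complex_eq_iff)
  moreover have "S \<noteq> 0" using assms(1) by auto
  ultimately show ?thesis using assms
    by (simp add: field_simps)
qed

lemma l2: fixes S P C :: complex assumes "S*S = 2" "P \<noteq> 0"
  shows "-C/(2*P) * (1/(1+\<i>)) = -((1+\<i>)/S)/(2*P*\<i>) * (C/S)"
proof -
  have ne: "1+\<i> \<noteq> 0" by (simp add: complex_eq_iff)
  have i: "1/(1+\<i>) = (1-\<i>)/2" using ne by (simp add: divide_simps) (simp add: algebra_simps flip: power2_eq_square)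
  have "S \<noteq> 0" using assms(1) by auto
  moreover have s4: "S * (S * 2) = 4" using assms(1) by (simp add: mult.assoc[symmetric])
  ultimately show ?thesis using assms unfolding i
    by (simp add: field_simps s4)
qed

lemma omega_eq: "\<beta> \<in> {-1,1} \<Longrightarrow> exp (of_real (- \<beta> * pi / 4) * \<i>) = (1 - of_real \<beta> * \<i>) / of_real (sqrt 2)"
proof -
  assume b: "\<beta> \<in> {-1,1}"
  have "exp (of_real (- \<beta> * pi / 4) * \<i>) = cis (- \<beta> * pi / 4)" by (simp add: cis_conv_exp mult.commute)
  also have "\<dots> = (1 - of_real \<beta> * \<i>) / of_real (sqrt 2)"
  proof -
    have s2: "sqrt 2 / 2 = 1 / sqrt 2" by (simp add: field_simps)
    have c1: "cis (- pi / 4) = Complex (sqrt 2/2) (-(sqrt 2/2))" by (simp add: complex_eq_iff cos_45 sin_45)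
    have c2: "cis (pi / 4) = Complex (sqrt 2/2) (sqrt 2/2)" by (simp add: complex_eq_iff cos_45 sin_45)
    have d1: "(1 - \<i>) / of_real (sqrt 2) = Complex (1/sqrt 2) (-(1/sqrt 2))" by (simp add: complex_eq_iff)
    have d2: "(1 + \<i>) / of_real (sqrt 2) = Complex (1/sqrt 2) (1/sqrt 2)" by (simp add: complex_eq_iff)
    from b show ?thesis
    proof
      assume "\<beta> = -1" then show ?thesis using c2 d2 s2 by simp
    next
      assume "\<beta> \<in> {1}" then show ?thesis using c1 d1 s2 by simp
    qed
  qed
  finally show ?thesis .
qed

lemma A0_zero:
  assumes b: "\<beta> \<in> {-1,1}"
  shows "A0 \<rho> \<alpha> \<beta> \<eta> 0 = of_real \<beta> * exp (of_real (- \<beta> * pi / 4) * \<i>) / (2 * of_real pi * \<i>)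
      * of_real (- (\<beta> / sqrt 2) * cot (((1 - \<beta>) * (pi / 2) + \<alpha> * \<eta>) / (2 * \<rho>)))"
proof -
  define c where "c = cot (((1 - \<beta>) * (pi / 2) + \<alpha> * \<eta>) / (2 * \<rho>))"
  have q0: "qf \<beta> 0 = 1 - of_real \<beta> * \<i>" using csqrt_m2bi[OF b] by (simp add: qf_def)
  have "A0 \<rho> \<alpha> \<beta> \<eta> 0 = of_real \<beta> / (2 * of_real pi) * of_real c * (1 / (1 - of_real \<beta> * \<i>))"
    unfolding A0_def zf0[OF b] q0 c_def by (simp add: cot_of_real)
  also have "\<dots> = of_real \<beta> * ((1 - of_real \<beta> * \<i>) / of_real (sqrt 2)) / (2 * of_real pi * \<i>) * of_real (- (\<beta> / sqrt 2) * c)"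
  proof -
    have s: "(of_real (sqrt 2) :: complex) * of_real (sqrt 2) = 2"
      by (simp flip: of_real_mult)
    have p: "(of_real pi :: complex) \<noteq> 0" by simp
    from b show ?thesis
    proof
      assume "\<beta> = -1"
      have e1: "(of_real (-1) :: complex) / (2 * of_real pi) * of_real c * (1 / (1 - of_real (-1) * \<i>)) = - of_real c/(2* of_real pi) * (1/(1+\<i>))"
        by simp
      have e2: "of_real (-1) * ((1 - of_real (-1) * \<i>) / of_real (sqrt 2)) / (2 * of_real pi * \<i>) * of_real (- (-1 / sqrt 2) * c)
          = -((1+\<i>)/of_real (sqrt 2))/(2* of_real pi*\<i>) * (of_real c/of_real (sqrt 2))"
      proof -
        have "(-1 - \<i>) = - (1 + \<i>)" by simp
        then show ?thesis by (simp only: of_real_minus of_real_1 of_real_mult of_real_divide minus_minus mult_minus_left minus_divide_left mult_1_left) simp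
      qed
      show ?thesis unfolding \<open>\<beta> = -1\<close> e1 e2 by (rule l2[OF s p])
    next
      assume "\<beta> \<in> {1}"
      then have b1: "\<beta> = 1" by simp
      have e1: "(of_real 1 :: complex) / (2 * of_real pi) * of_real c * (1 / (1 - of_real 1 * \<i>)) = of_real c/(2* of_real pi) * (1/(1-\<i>))"
        by simp
      have e2: "of_real 1 * ((1 - of_real 1 * \<i>) / of_real (sqrt 2)) / (2 * of_real pi * \<i>) * of_real (- (1 / sqrt 2) * c)
          = ((1-\<i>)/of_real (sqrt 2))/(2* of_real pi*\<i>) * (-(of_real c/of_real (sqrt 2)))"
        by simp
      show ?thesis unfolding b1 e1 e2 by (rule l1[OF s p])
    qed
  qed
  finally show ?thesis unfolding omega_eq[OF b] c_def .
qed

lemma l3: fixes B \<sigma> S P Q R :: complex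
  assumes B: "B*B=1" and gg: "\<sigma>*\<sigma>=1" and S: "S*S=2" and P: "P\<noteq>0" and Q: "Q\<noteq>0" and Bi: "1+B*\<i> \<noteq> 0"
  shows "-(B*R)/(2*P*\<i>) / (-(\<sigma> * (Q/S) * (1+B*\<i>))) = -(B*((1-B*\<i>)/S)/(2*P*\<i>) * (-(R*(\<sigma>*(1/Q)))))"
proof -
  have S0: "S \<noteq> 0" using S by auto
  have s0: "\<sigma> \<noteq> 0" using gg by auto
  have "(1+B*\<i>) * (1-B*\<i>) = 1 - (B*B) * (\<i>*\<i>)" by (simp add: algebra_simps)
  then have key: "(1+B*\<i>) * (1-B*\<i>) = 2" using B by simp
  have inv: "1/(1+B*\<i>) = (1-B*\<i>)/2" using key Bi by (simp add: field_simps)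
  have "-(B*R)/(2*P*\<i>) / (-(\<sigma> * (Q/S) * (1+B*\<i>))) = (B*R) * S / (2*P*\<i> * \<sigma> * Q) * (1/(1+B*\<i>))"
    using S0 s0 Q P Bi by (simp add: field_simps)
  also have "\<dots> = (B*R) * S * (1-B*\<i>) / (2*P*\<i> * \<sigma> * Q * 2)" unfolding inv by (simp add: field_simps)
  also have "\<dots> = (B*R) * (1-B*\<i>) * \<sigma> / (2*P*\<i> * Q * S)"
  proof -
    have "S * (S * \<sigma>) * \<sigma> = (S*S)*(\<sigma>*\<sigma>)" by (simp add: ac_simps)
    then have "S * (S * \<sigma>) * \<sigma> = 2" using S gg by simp
    have s4: "S * (S * 2) = 4" using S by (simp add: mult.assoc[symmetric])
    have g4: "\<sigma> * (\<sigma> * 4) = 4" using gg by (simp add: mult.assoc[symmetric])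
    show ?thesis using S0 s0 Q P by (simp add: field_simps) (simp add: s4 g4)
  qed
  also have "\<dots> = -(B*((1-B*\<i>)/S)/(2*P*\<i>) * (-(R*(\<sigma>*(1/Q)))))"
    using S0 s0 Q P by (simp add: field_simps)
  finally show ?thesis .
qed

lemma sum_zero_term:
  assumes b: "\<beta> \<in> {-1,1}" and c: "cos \<phi> \<noteq> 0"
  shows "a0 \<rho> \<beta> / (0 - pf \<beta> \<phi>) = - (of_real \<beta> * exp (of_real (- \<beta> * pi / 4) * \<i>) / (2 * of_real pi * \<i>)
            * of_real (- (\<rho> * (sigma_sgn \<phi> * (1 - \<beta> * sin \<phi>) powr (- 1 / 2)))))"
proof -
  define u where "u = 1 - \<beta> * sin \<phi>"
  have "(cos \<phi>)^2 > 0" using c by simp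
  then have s2: "(sin \<phi>)^2 < 1" using sin_cos_squared_add[of \<phi>] by linarith
  have u0: "u > 0"
  proof -
    have "\<bar>sin \<phi>\<bar> < 1" using s2 by (simp add: abs_square_less_1)
    then show ?thesis using b by (auto simp: u_def)
  qed
  define B where "B = (of_real \<beta> :: complex)"
  define gg where "gg = (of_real (sigma_sgn \<phi>) :: complex)"
  define S where "S = (of_real (sqrt 2) :: complex)"
  define P where "P = (of_real pi :: complex)"
  define Q where "Q = (of_real (sqrt u) :: complex)"
  define R where "R = (of_real \<rho> :: complex)"
  have BB: "B*B = 1" using b by (auto simp: B_def)
  have gggg: "gg * gg = 1"
  proof -
    have "sigma_sgn \<phi> * sigma_sgn \<phi> = 1" using c by (auto simp: sigma_sgn_def sgn_if)
    then show ?thesis unfolding gg_def by (simp flip: of_real_mult)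
  qed
  have SS: "S*S = 2" unfolding S_def by (simp flip: of_real_mult)
  have P0: "P \<noteq> 0" by (simp add: P_def)
  have Q0: "Q \<noteq> 0" using u0 by (simp add: Q_def)
  have Bi: "1 + B * \<i> \<noteq> 0" using b by (auto simp: B_def complex_eq_iff)
  have pf: "pf \<beta> \<phi> = gg * (Q/S) * (1 + B * \<i>)"
  proof -
    have "sqrt (u/2) = sqrt u / sqrt 2" by (simp add: real_sqrt_divide)
    then show ?thesis unfolding pf_def csqrt_pf[OF b u_def less_imp_le[OF u0]] gg_def Q_def S_def B_def
      by (simp add: mult.assoc)
  qed
  have lhs: "a0 \<rho> \<beta> / (0 - pf \<beta> \<phi>) = -(B*R)/(2*P*\<i>) / (-(gg * (Q/S) * (1+B*\<i>)))"
    unfolding pf a0_def B_def R_def P_def by simp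
  have pw: "u powr (- 1 / 2) = 1 / sqrt u"
  proof -
    have "u powr (- 1 / 2) = 1 / u powr (1/2)" by (simp add: powr_minus_divide[symmetric])
    then show ?thesis using u0 by (simp add: powr_half_sqrt)
  qed
  have rhs: "- (of_real \<beta> * exp (of_real (- \<beta> * pi / 4) * \<i>) / (2 * of_real pi * \<i>)
            * of_real (- (\<rho> * (sigma_sgn \<phi> * (1 - \<beta> * sin \<phi>) powr (- 1 / 2)))))
        = -(B*((1-B*\<i>)/S)/(2*P*\<i>) * (-(R*(gg * (1/Q)))))"
    unfolding omega_eq[OF b] u_def[symmetric] pw B_def S_def P_def R_def gg_def Q_def by simp
  show ?thesis unfolding lhs rhs by (rule l3[OF BB gggg SS P0 Q0 Bi])
qed

lemma B0_zero:
  assumes b: "\<beta> \<in> {-1,1}"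
    and h4: "\<not> (\<exists>k::int. \<alpha> * \<eta> = - pi + 2 * pi * \<rho> * of_int k)"
    and h5: "\<not> (\<exists>k::int. \<alpha> * \<eta> = 2 * pi * \<rho> * of_int k)"
  shows "B0 \<rho> \<alpha> \<beta> \<eta> 0 = of_real \<beta> * exp (of_real (- \<beta> * pi / 4) * \<i>) / (2 * of_real pi * \<i>)
        * of_real (- (\<beta> / sqrt 2) * cot (((1 - \<beta>) * (pi / 2) + \<alpha> * \<eta>) / (2 * \<rho>))
                   - \<rho> * (\<Sum>\<phi>\<in>Pset \<rho> (\<alpha> * \<eta>). sigma_sgn \<phi> * (1 - \<beta> * sin \<phi>) powr (- 1 / 2)))"
proof -
  define K where "K = of_real \<beta> * exp (of_real (- \<beta> * pi / 4) * \<i>) / (2 * of_real pi * \<i>)"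
  define X1 where "X1 = - (\<beta> / sqrt 2) * cot (((1 - \<beta>) * (pi / 2) + \<alpha> * \<eta>) / (2 * \<rho>))"
  define g where "g \<phi> = sigma_sgn \<phi> * (1 - \<beta> * sin \<phi>) powr (- 1 / 2)" for \<phi>
  have A: "A0 \<rho> \<alpha> \<beta> \<eta> 0 = K * of_real X1" unfolding K_def X1_def by (rule A0_zero[OF b])
  have T: "a0 \<rho> \<beta> / (0 - pf \<beta> \<phi>) = - (K * of_real (- (\<rho> * g \<phi>)))" if "\<phi> \<in> Pset \<rho> (\<alpha> * \<eta>)" for \<phi>
    unfolding K_def g_def by (rule sum_zero_term[OF b Pset_cos[OF h4 h5 that]])
  have "B0 \<rho> \<alpha> \<beta> \<eta> 0 = K * of_real X1 - (\<Sum>\<phi>\<in>Pset \<rho> (\<alpha> * \<eta>). - (K * of_real (- (\<rho> * g \<phi>))))"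
    unfolding B0_def A using T by (simp cong: sum.cong)
  also have "\<dots> = K * of_real (X1 - \<rho> * (\<Sum>\<phi>\<in>Pset \<rho> (\<alpha> * \<eta>). g \<phi>))"
  proof -
    have s1: "(\<Sum>\<phi>\<in>Pset \<rho> (\<alpha> * \<eta>). - (K * of_real (- (\<rho> * g \<phi>)))) = - (K * of_real (\<Sum>\<phi>\<in>Pset \<rho> (\<alpha> * \<eta>). - (\<rho> * g \<phi>)))"
    proof -
      have gen: "\<And>h. (\<Sum>\<phi>\<in>Pset \<rho> (\<alpha> * \<eta>). - (K * of_real (h \<phi>))) = - (K * of_real (sum h (Pset \<rho> (\<alpha> * \<eta>))))"
        by (simp add: sum_negf of_real_sum sum_distrib_left)
      show ?thesis by (rule gen)
    qed
    have s2: "(\<Sum>\<phi>\<in>Pset \<rho> (\<alpha> * \<eta>). - (\<rho> * g \<phi>)) = - (\<rho> * (\<Sum>\<phi>\<in>Pset \<rho> (\<alpha> * \<eta>). g \<phi>))"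
      by (simp only: sum_negf sum_distrib_left)
    show ?thesis unfolding s1 s2 by (simp add: algebra_simps)
  qed
  finally show ?thesis unfolding K_def X1_def g_def .
qed

lemma taylor0:
  assumes b: "\<beta> \<in> {-1,1}"
    and h4: "\<not> (\<exists>k::int. \<alpha> * \<eta> = - pi + 2 * pi * \<rho> * of_int k)"
    and h5: "\<not> (\<exists>k::int. \<alpha> * \<eta> = 2 * pi * \<rho> * of_int k)"
  shows "taylor_coeff (B_fun \<rho> \<alpha> \<beta> \<eta> x) 0 =
        of_real \<beta> * exp (of_real (\<beta> * (x - pi / 4)) * \<i>) / (2 * of_real pi * \<i>)
        * of_real (- (\<beta> / sqrt 2) * cot (((1 - \<beta>) * (pi / 2) + \<alpha> * \<eta>) / (2 * \<rho>))
                   - \<rho> * (\<Sum>\<phi>\<in>Pset \<rho> (\<alpha> * \<eta>). sigma_sgn \<phi> * (1 - \<beta> * sin \<phi>) powr (- 1 / 2)))"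
proof -
  have e: "exp (of_real (\<beta> * (x - pi / 4)) * \<i>) = exp (of_real (x * \<beta>) * \<i>) * exp (of_real (- \<beta> * pi / 4) * \<i>)"
  proof -
    have "\<beta> * (x - pi / 4) = x * \<beta> + (- \<beta> * pi / 4)" by (simp add: algebra_simps)
    then have "of_real (\<beta> * (x - pi / 4)) * \<i> = of_real (x * \<beta>) * \<i> + of_real (- \<beta> * pi / 4) * \<i>"
      by (simp only: of_real_add distrib_right)
    then show ?thesis by (simp only: exp_add)
  qed
  have tc: "taylor_coeff (B_fun \<rho> \<alpha> \<beta> \<eta> x) 0 = exp (of_real (x * \<beta>) * \<i>) * B0 \<rho> \<alpha> \<beta> \<eta> 0"
    by (simp add: taylor_coeff_def Bfun_eq)
  have gen: "\<And>E bb w d X :: complex. E * (bb * w / d * X) = bb * (E * w) / d * X" by (simp add: divide_inverse mult_ac)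
  show ?thesis unfolding tc e B0_zero[OF b h4 h5] by (rule gen)
qed

lemma tc_eq:
  assumes r: "\<rho> > 0" and b: "\<beta> \<in> {-1,1}"
    and h4: "\<not> (\<exists>k::int. \<alpha> * \<eta> = - pi + 2 * pi * \<rho> * of_int k)"
    and h5: "\<not> (\<exists>k::int. \<alpha> * \<eta> = 2 * pi * \<rho> * of_int k)"
  shows "taylor_coeff (B_fun \<rho> \<alpha> \<beta> \<eta> x) j = exp (of_real (x * \<beta>) * \<i>) * ((deriv^^j) (B0 \<rho> \<alpha> \<beta> \<eta>) 0 / fact j)"
proof -
  have an: "B0 \<rho> \<alpha> \<beta> \<eta> analytic_on {0}" using B0_analytic[OF r b h4 h5, of 0] by simp
  show ?thesis unfolding taylor_coeff_def Bfun_eq higher_deriv_cmult'[OF an] by (simp add: of_nat_fact)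
qed

lemma norm_E: "norm (exp (of_real (x * \<beta>) * \<i>)) = 1" by simp

theorem mainTheorem8:
  fixes \<rho> \<alpha> \<beta> \<eta> :: real
  assumes "\<rho> > 0"
    and "\<alpha> \<in> {-1, 1}" and "\<beta> \<in> {-1, 1}"
    and "\<not> (\<exists>k::int. \<alpha> * \<eta> = - pi + 2 * pi * \<rho> * of_int k)"
    and "\<not> (\<exists>k::int. \<alpha> * \<eta> = 2 * pi * \<rho> * of_int k)"
  shows "(\<forall>x>0. (\<lambda>s::real. exp (- of_real (x * s\<^sup>2)) * B_fun \<rho> \<alpha> \<beta> \<eta> x (of_real s))
                   integrable_on UNIV)
    \<and> (\<forall>N::nat.
        (\<lambda>x::real. integral UNIV (\<lambda>s::real. exp (- of_real (x * s\<^sup>2)) * B_fun \<rho> \<alpha> \<beta> \<eta> x (of_real s))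
            - (\<Sum>k<N. taylor_coeff (B_fun \<rho> \<alpha> \<beta> \<eta> x) (2 * k)
                        * of_real (Gamma ((2 * real k + 1) / 2))
                        * of_real (x powr (- (2 * real k + 1) / 2))))
        \<in> O[at_top](\<lambda>x. of_real (x powr (- (2 * real N + 1) / 2))))
    \<and> (\<forall>x>0. taylor_coeff (B_fun \<rho> \<alpha> \<beta> \<eta> x) 0 =
        of_real \<beta> * exp (of_real (\<beta> * (x - pi / 4)) * \<i>) / (2 * of_real pi * \<i>)
        * of_real (- (\<beta> / sqrt 2) * cot (((1 - \<beta>) * (pi / 2) + \<alpha> * \<eta>) / (2 * \<rho>))
                   - \<rho> * (\<Sum>\<phi>\<in>Pset \<rho> (\<alpha> * \<eta>). sigma_sgn \<phi> * (1 - \<beta> * sin \<phi>) powr (- 1 / 2))))"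
proof -
  note r = assms(1) and b = assms(3) and h4 = assms(4) and h5 = assms(5)
  define f where "f = B0 \<rho> \<alpha> \<beta> \<eta>"
  define E where "E x = exp (of_real (x * \<beta>) * \<i>)" for x :: real
  have an: "f analytic_on {0}" using B0_analytic[OF r b h4 h5, of 0] by (simp add: f_def)
  have cont: "continuous_on UNIV (\<lambda>t::real. f (of_real t))" unfolding f_def by (rule B0_cont[OF r b h4 h5])
  obtain M where M: "\<And>t::real. norm (f (of_real t)) \<le> M" using B0_bounded[OF r b h4 h5] unfolding f_def by blast
  have rem: "\<exists>K. \<forall>t::real. norm (f (of_real t) - (\<Sum>j<2*N. (deriv^^j) f 0 / fact j * of_real t ^ j)) \<le> K * \<bar>t\<bar>^(2*N)" for N
    by (rule taylor_remainder_real[OF an M])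
  have Beq: "B_fun \<rho> \<alpha> \<beta> \<eta> x (of_real s) = E x * f (of_real s)" for x s
    by (simp add: Bfun_eq E_def f_def)
  have integ: "(\<lambda>s::real. exp (- of_real (x * s\<^sup>2)) * B_fun \<rho> \<alpha> \<beta> \<eta> x (of_real s)) integrable_on UNIV" if x: "x > 0" for x
  proof -
    obtain K where K: "\<forall>t::real. norm (f (of_real t) - (\<Sum>j<2*0. (deriv^^j) f 0 / fact j * of_real t ^ j)) \<le> K * \<bar>t\<bar>^(2*0)"
      using rem[of 0] by blast
    have "(\<lambda>t::real. exp (- of_real (x*t\<^sup>2)) * f (of_real t)) integrable_on UNIV"
      by (rule watson_x(1)[OF cont _ x]) (use K in blast)
    then have "(\<lambda>t::real. E x * (exp (- of_real (x*t\<^sup>2)) * f (of_real t))) integrable_on UNIV"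
      by (rule integrable_on_mult_right)
    then show ?thesis unfolding Beq by (simp add: mult_ac)
  qed
  have big: "(\<lambda>x::real. integral UNIV (\<lambda>s::real. exp (- of_real (x * s\<^sup>2)) * B_fun \<rho> \<alpha> \<beta> \<eta> x (of_real s))
            - (\<Sum>k<N. taylor_coeff (B_fun \<rho> \<alpha> \<beta> \<eta> x) (2 * k)
                        * of_real (Gamma ((2 * real k + 1) / 2))
                        * of_real (x powr (- (2 * real k + 1) / 2))))
        \<in> O[at_top](\<lambda>x. of_real (x powr (- (2 * real N + 1) / 2)))" for N
  proof -
    obtain K where K: "\<And>t::real. norm (f (of_real t) - (\<Sum>j<2*N. (deriv^^j) f 0 / fact j * of_real t ^ j)) \<le> K * \<bar>t\<bar>^(2*N)"
      using rem[of N] by blast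
    show ?thesis
    proof (rule bigoI[where c = "K * Gamma ((2 * real N + 1) / 2)"])
      show "\<forall>\<^sub>F x in at_top. norm (integral UNIV (\<lambda>s::real. exp (- of_real (x * s\<^sup>2)) * B_fun \<rho> \<alpha> \<beta> \<eta> x (of_real s))
            - (\<Sum>k<N. taylor_coeff (B_fun \<rho> \<alpha> \<beta> \<eta> x) (2 * k)
                        * of_real (Gamma ((2 * real k + 1) / 2))
                        * of_real (x powr (- (2 * real k + 1) / 2))))
          \<le> K * Gamma ((2 * real N + 1) / 2) * norm (of_real (x powr (- (2 * real N + 1) / 2)) :: complex)"
        using eventually_gt_at_top[of 0]
      proof eventually_elim
        case (elim x)
        define D where "D = integral UNIV (\<lambda>t::real. exp (- of_real (x*t\<^sup>2)) * f (of_real t))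
           - (\<Sum>k<N. (deriv^^(2*k)) f 0 / fact (2*k) * of_real (Gamma ((2 * real k + 1) / 2)) * of_real (x powr (- (2 * real k + 1) / 2)))"
        have W: "norm D \<le> K * Gamma ((2 * real N + 1) / 2) * x powr (- (2 * real N + 1) / 2)"
          unfolding D_def by (rule watson_x(2)[OF cont K elim])
        have I: "integral UNIV (\<lambda>s::real. exp (- of_real (x * s\<^sup>2)) * B_fun \<rho> \<alpha> \<beta> \<eta> x (of_real s))
              = E x * integral UNIV (\<lambda>t::real. exp (- of_real (x*t\<^sup>2)) * f (of_real t))"
          unfolding Beq by (simp add: mult.left_commute)
        have S: "(\<Sum>k<N. taylor_coeff (B_fun \<rho> \<alpha> \<beta> \<eta> x) (2 * k)
                        * of_real (Gamma ((2 * real k + 1) / 2))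
                        * of_real (x powr (- (2 * real k + 1) / 2)))
              = E x * (\<Sum>k<N. (deriv^^(2*k)) f 0 / fact (2*k) * of_real (Gamma ((2 * real k + 1) / 2)) * of_real (x powr (- (2 * real k + 1) / 2)))"
          unfolding tc_eq[OF r b h4 h5] E_def f_def by (simp add: sum_distrib_left mult.assoc)
        have "norm (integral UNIV (\<lambda>s::real. exp (- of_real (x * s\<^sup>2)) * B_fun \<rho> \<alpha> \<beta> \<eta> x (of_real s))
            - (\<Sum>k<N. taylor_coeff (B_fun \<rho> \<alpha> \<beta> \<eta> x) (2 * k)
                        * of_real (Gamma ((2 * real k + 1) / 2))
                        * of_real (x powr (- (2 * real k + 1) / 2)))) = norm (E x * D)"
          unfolding I S D_def by (simp add: right_diff_distrib)
        also have "\<dots> = norm D" by (simp add: norm_mult E_def)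
        also have "\<dots> \<le> K * Gamma ((2 * real N + 1) / 2) * norm (of_real (x powr (- (2 * real N + 1) / 2)) :: complex)"
          using W by simp
        finally show ?case .
      qed
    qed
  qed
  show ?thesis
    using integ big taylor0[OF b h4 h5] by blast
qed

end
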